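(* Let $E_0,E_1$ be Hilbert spaces, $d,\nu\in\mathbb{R}$, and $p\in\widetilde{\mathbf S}^{d,\nu}_{\mathrm{Hom}}(\mathbb{R}^{n-1}\times\overline{\mathbb{R}}_+;\mathcal L(E_0,E_1))$. Assume (1) $p(x',\xi',\mu)$ is invertible whenever $\xi'\neq0$, and $\|p(x',\xi',\mu)^{-1}|\xi'|^\nu\|_{\mathcal L(E_1,E_0)}\lesssim 1$ uniformly for all $x'\in\mathbb{R}^{n-1}$ and all $(\xi',\mu)\in\mathbb{R}^{n-1}\times\overline{\mathbb{R}}_+$ with $|\xi'|^2+\mu^2=1$, $\xi'\ne0$; (2) the principal angular symbol $p_{\langle\nu\rangle}(x',\xi')$ is invertible whenever $\xi'\ne0$, and $\|p_{\langle\nu\rangle}(x',\xi')^{-1}\|_{\mathcal L(E_1,E_0)}\lesssim1$ uniformly for $x'\in\mathbb{R}^{n-1}$, $|\xi'|=1$. Then $p^{-1}\in\widetilde{\mathbf S}^{-d,-\nu}_{\mathrm{Hom}}(\mathbb{R}^{n-1}\times\overline{\mathbb{R}}_+;\mathcal L(E_1,E_0))$.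
   Context: For a Fréchet (here Banach) space $F$ (here $F=\mathcal L(E_0,E_1)$ with the operator norm), $\widetilde{\mathbf S}^{d,\nu}_{\mathrm{Hom}}(\mathbb{R}^{n-1}\times\overline{\mathbb{R}}_+;F)$ is the space of smooth $F$-valued functions $p(x',\xi',\mu)$ on $\mathbb{R}^{n-1}\times(\mathbb{R}^{n-1}\setminus\{0\})\times\overline{\mathbb{R}}_+$, positively homogeneous of degree $d$ in $(\xi',\mu)$, such that the function $(x',r,\phi)\mapsto r^{-\nu}p(x',r\phi,\sqrt{1-r^2})$, $(r,\phi)\in(0,1]\times\mathbb{S}^{n-2}$, extends to an element of $\mathscr C^\infty_b(\mathbb{R}^{n-1}_{x'},\mathscr C^\infty([0,1]\times\mathbb{S}^{n-2};F))$ (smooth in $x'$, all $x'$-derivatives bounded in that Fréchet space). The principal angular symbol is $p_{\langle\nu\rangle}(x',\xi')=|\xi'|^\nu\lim_{r\to0+}r^{-\nu}p\big(x',r\xi'/|\xi'|,\sqrt{1-r^2}\big)$, $\xi'\ne0$. *)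

theory Defs
  imports "HOL-Analysis.Analysis"
begin

text \<open>C-infinity on an arbitrary set S (one-sided at boundary points): there is a
family D of iterated directional derivatives, D [] = f on S, and the derivative
of D vs within S at x is the linear map v maps-to D (v # vs) x.\<close>
definition smooth_on :: "'a::real_normed_vector set \<Rightarrow> ('a \<Rightarrow> 'b::real_normed_vector) \<Rightarrow> bool" where
  "smooth_on S f \<longleftrightarrow> (\<exists>D :: 'a list \<Rightarrow> 'a \<Rightarrow> 'b.
      (\<forall>x\<in>S. D [] x = f x) \<and>
      (\<forall>vs. \<forall>x\<in>S. (D vs has_derivative (\<lambda>v. D (v # vs) x)) (at x within S)))"

definition smooth_bounded_on :: "'a::euclidean_space set \<Rightarrow> ('a \<Rightarrow> 'b::real_normed_vector) \<Rightarrow> bool" where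
  "smooth_bounded_on S f \<longleftrightarrow> (\<exists>D :: 'a list \<Rightarrow> 'a \<Rightarrow> 'b.
      (\<forall>x\<in>S. D [] x = f x) \<and>
      (\<forall>vs. \<forall>x\<in>S. (D vs has_derivative (\<lambda>v. D (v # vs) x)) (at x within S)) \<and>
      (\<forall>vs \<in> lists Basis. bounded (D vs ` S)))"

definition blinvertible :: "('a::real_normed_vector \<Rightarrow>\<^sub>L 'b::real_normed_vector) \<Rightarrow> bool" where
  "blinvertible A \<longleftrightarrow> (\<exists>B. B o\<^sub>L A = id_blinfun \<and> A o\<^sub>L B = id_blinfun)"

definition blinv :: "('a::real_normed_vector \<Rightarrow>\<^sub>L 'b::real_normed_vector) \<Rightarrow> ('b \<Rightarrow>\<^sub>L 'a)" where
  "blinv A = (SOME B. B o\<^sub>L A = id_blinfun \<and> A o\<^sub>L B = id_blinfun)"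

text \<open>Annulus, an open neighbourhood of the unit sphere S^{n-2} in R^{n-1}.\<close>
definition annulus :: "('n::finite) itself \<Rightarrow> (real^'n) set" where
  "annulus _ = {\<phi>. 1/2 < norm \<phi> \<and> norm \<phi> < 2}"

text \<open>The symbol class tilde-S^{d,nu}_Hom(R^{n-1} x closed R_+; F), with
R^{n-1} rendered as real^'n.  A symbol is a function p x' xi' mu; only its values
on the domain xi' \<noteq> 0, mu \<ge> 0 matter.\<close>
definition S_Hom :: "real \<Rightarrow> real \<Rightarrow> (real^'n \<Rightarrow> real^'n \<Rightarrow> real \<Rightarrow> 'f::real_normed_vector) set" where
  "S_Hom d \<nu> = {p.
     smooth_on (UNIV \<times> (UNIV - {0}) \<times> {0..}) (\<lambda>(x, \<xi>, \<mu>). p x \<xi> \<mu>) \<and>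
     (\<forall>x \<xi> \<mu> t. \<xi> \<noteq> 0 \<and> 0 \<le> \<mu> \<and> 0 < t \<longrightarrow> p x (t *\<^sub>R \<xi>) (t * \<mu>) = t powr d *\<^sub>R p x \<xi> \<mu>) \<and>
     (\<exists>q :: (real^'n) \<times> real \<times> (real^'n) \<Rightarrow> 'f.
        smooth_bounded_on (UNIV \<times> {0..1} \<times> annulus TYPE('n)) q \<and>
        (\<forall>x r \<phi>. 0 < r \<and> r \<le> 1 \<and> norm \<phi> = 1 \<longrightarrow>
           q (x, r, \<phi>) = r powr (-\<nu>) *\<^sub>R p x (r *\<^sub>R \<phi>) (sqrt (1 - r\<^sup>2))))}"

definition principal_angular_symbol ::
  "real \<Rightarrow> (real^'n \<Rightarrow> real^'n \<Rightarrow> real \<Rightarrow> 'f::real_normed_vector) \<Rightarrow> real^'n \<Rightarrow> real^'n \<Rightarrow> 'f" where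
  "principal_angular_symbol \<nu> p x \<xi> =
     (norm \<xi> powr \<nu>) *\<^sub>R
       Lim (at_right 0) (\<lambda>r. r powr (-\<nu>) *\<^sub>R p x (r *\<^sub>R (inverse (norm \<xi>) *\<^sub>R \<xi>)) (sqrt (1 - r\<^sup>2)))"

end

theory Submission
  imports Defs
begin

lemma blinv_props:
  assumes "blinvertible A"
  shows "blinv A o\<^sub>L A = id_blinfun" "A o\<^sub>L blinv A = id_blinfun"
  using someI_ex[OF assms[unfolded blinvertible_def]] unfolding blinv_def by auto

lemma blinfun_compose_assoc': "(a o\<^sub>L b) o\<^sub>L c = a o\<^sub>L (b o\<^sub>L c)"
  by (rule blinfun_eqI) simp

lemma blinfun_compose_id[simp]: "a o\<^sub>L id_blinfun = a" "id_blinfun o\<^sub>L a = a"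
  by (rule blinfun_eqI, simp)+

lemma blinv_unique:
  assumes "B o\<^sub>L A = id_blinfun" "A o\<^sub>L B = id_blinfun"
  shows "blinv A = B"
proof -
  have inv: "blinvertible A" using assms unfolding blinvertible_def by blast
  have "blinv A = blinv A o\<^sub>L (A o\<^sub>L B)" using assms by simp
  also have "\<dots> = (blinv A o\<^sub>L A) o\<^sub>L B" by (simp add: blinfun_compose_assoc')
  also have "\<dots> = B" using blinv_props[OF inv] by simp
  finally show ?thesis .
qed

lemma blinv_scaleR:
  assumes "blinvertible A" "c \<noteq> 0"
  shows "blinv (c *\<^sub>R A) = inverse c *\<^sub>R blinv A" "blinvertible (c *\<^sub>R A)"
proof -
  have e: "(inverse c *\<^sub>R blinv A) o\<^sub>L (c *\<^sub>R A) = id_blinfun" "(c *\<^sub>R A) o\<^sub>L (inverse c *\<^sub>R blinv A) = id_blinfun"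
    using blinv_props[OF assms(1)] assms(2)
    by (auto simp: blinfun.scaleR_left blinfun.scaleR_right bounded_bilinear.scaleR_left[OF bounded_bilinear_blinfun_compose]
       bounded_bilinear.scaleR_right[OF bounded_bilinear_blinfun_compose])
  show "blinv (c *\<^sub>R A) = inverse c *\<^sub>R blinv A" by (rule blinv_unique[OF e])
  show "blinvertible (c *\<^sub>R A)" using e unfolding blinvertible_def by blast
qed

lemma blinv_bound:
  assumes "blinvertible A"
  shows "norm u \<le> norm (blinv A) * norm (A u)"
proof -
  have "u = blinv A (A u)" using blinv_props(1)[OF assms] by (metis blinfun_apply_blinfun_compose blinfun_apply_id_blinfun)
  then show ?thesis by (metis norm_blinfun)
qed


lemma norm_compose3: "norm (a o\<^sub>L b o\<^sub>L c) \<le> norm a * norm b * norm c"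
proof -
  have "norm (a o\<^sub>L b o\<^sub>L c) \<le> norm (a o\<^sub>L b) * norm c" by (rule norm_blinfun_compose)
  also have "\<dots> \<le> norm a * norm b * norm c" by (intro mult_right_mono norm_blinfun_compose norm_ge_zero)
  finally show ?thesis .
qed

lemma blinv_diff_identity:
  assumes "blinvertible A" "blinvertible B"
  shows "blinv B - blinv A = - (blinv B o\<^sub>L (B - A) o\<^sub>L blinv A)"
proof (rule blinfun_eqI)
  fix u
  have 1: "\<And>w. blinv B (B w) = w" using blinv_props(1)[OF assms(2)]
    by (metis blinfun_apply_blinfun_compose blinfun_apply_id_blinfun)
  have 2: "\<And>w. A (blinv A w) = w" using blinv_props(2)[OF assms(1)]
    by (metis blinfun_apply_blinfun_compose blinfun_apply_id_blinfun)
  show "(blinv B - blinv A) u = (- (blinv B o\<^sub>L (B - A) o\<^sub>L blinv A)) u"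
    by (simp add: blinfun.diff_left blinfun.diff_right blinfun.minus_left 1 2)
qed

lemma blinv_has_derivative:
  fixes f :: "'a::real_normed_vector \<Rightarrow> ('b::real_normed_vector \<Rightarrow>\<^sub>L 'c::real_normed_vector)"
  assumes fd: "(f has_derivative f') (at y within S)" and inv: "\<forall>z\<in>S. blinvertible (f z)" and y: "y \<in> S"
  shows "((\<lambda>z. blinv (f z)) has_derivative (\<lambda>h. - (blinv (f y) o\<^sub>L f' h o\<^sub>L blinv (f y)))) (at y within S)"
proof -
  define g where "g z = blinv (f z)" for z
  define M where "M = norm (g y)"
  have M0: "0 \<le> M" by (simp add: M_def)
  interpret F: bounded_linear f' using fd by (rule has_derivative_bounded_linear)
  obtain K where K: "\<And>h. norm (f' h) \<le> norm h * K" "K > 0" using F.pos_bounded by blast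
  have ident: "g z - g y = - (g z o\<^sub>L (f z - f y) o\<^sub>L g y)" if "z \<in> S" for z
    unfolding g_def by (rule blinv_diff_identity) (use inv y that in auto)
  have fc: "(f \<longlongrightarrow> f y) (at y within S)"
    using has_derivative_continuous[OF fd] by (simp add: continuous_within)
  have ev1: "eventually (\<lambda>z. norm (f z - f y) < 1 / (2 * M + 1)) (at y within S)"
    using fc[unfolded tendsto_iff, rule_format, of "1 / (2 * M + 1)"] M0 by (simp add: dist_norm)
  have ev2: "eventually (\<lambda>z. z \<in> S) (at y within S)" by (simp add: eventually_at_filter)
  have gb: "norm (g z) \<le> 2 * M" if "z \<in> S" "norm (f z - f y) < 1 / (2 * M + 1)" for z
  proof (rule norm_blinfun_bound)
    show "0 \<le> 2 * M" using M0 by simp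
    fix w
    define u where "u = g z w"
    have fzu: "f z u = w" unfolding u_def g_def using blinv_props(2)[of "f z"] inv that(1)
      by (metis blinfun_apply_blinfun_compose blinfun_apply_id_blinfun)
    have "norm u \<le> M * norm (f y u)" unfolding M_def g_def using blinv_bound inv y by blast
    also have "f y u = f z u - (f z - f y) u" by (simp add: blinfun.diff_left)
    also have "M * norm (f z u - (f z - f y) u) \<le> M * (norm w + norm (f z - f y) * norm u)"
      using M0 by (intro mult_left_mono) (auto simp: fzu intro!: order_trans[OF norm_triangle_ineq4] norm_blinfun)
    also have "M * norm (f z - f y) \<le> 1/2"
    proof -
      have "M * norm (f z - f y) \<le> M * (1 / (2 * M + 1))" using that(2) M0 by (intro mult_left_mono) auto
      also have "\<dots> \<le> 1/2" using M0 by (simp add: field_simps)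
      finally show ?thesis .
    qed
    then have "norm u * (M * norm (f z - f y)) \<le> norm u * (1/2)"
      by (intro mult_left_mono) auto
    then have "M * (norm w + norm (f z - f y) * norm u) \<le> M * norm w + 1/2 * norm u"
      by (simp add: algebra_simps)
    finally show "norm (g z w) \<le> 2 * M * norm w" unfolding u_def by simp
  qed
  have gc: "(g \<longlongrightarrow> g y) (at y within S)"
  proof -
    have "((\<lambda>z. 2 * M * M * norm (f z - f y)) \<longlongrightarrow> 2 * M * M * norm (f y - f y)) (at y within S)"
      by (intro tendsto_intros fc)
    then have l: "((\<lambda>z. 2 * M * M * norm (f z - f y)) \<longlongrightarrow> 0) (at y within S)" by simp
    have "eventually (\<lambda>z. norm (g z - g y) \<le> 2 * M * M * norm (f z - f y)) (at y within S)"
      using ev1 ev2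
    proof eventually_elim
      case (elim z)
      have "norm (g z - g y) = norm (g z o\<^sub>L (f z - f y) o\<^sub>L g y)" using ident[OF elim(2)] by simp
      also have "\<dots> \<le> norm (g z) * norm (f z - f y) * norm (g y)"
        by (rule norm_compose3)
      also have "\<dots> \<le> 2 * M * norm (f z - f y) * M"
        using gb[OF elim(2,1)] M0 unfolding M_def[symmetric] by (intro mult_right_mono) auto
      finally show ?case by (simp add: algebra_simps)
    qed
    then have "((\<lambda>z. g z - g y) \<longlongrightarrow> 0) (at y within S)" by (rule Lim_null_comparison) (rule l)
    then show ?thesis by (simp add: LIM_zero_iff)
  qed
  define R where "R z = norm (f z - f y - f' (z - y)) / norm (z - y)" for z
  have R0: "(R \<longlongrightarrow> 0) (at y within S)" using fd unfolding has_derivative_iff_norm R_def by simp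
  show ?thesis unfolding g_def[symmetric] has_derivative_iff_norm
  proof
    show "bounded_linear (\<lambda>h. - (g y o\<^sub>L f' h o\<^sub>L g y))"
    proof -
      have "bounded_linear (\<lambda>h. g y o\<^sub>L f' h)"
        by (rule bounded_linear_compose[OF bounded_bilinear.bounded_linear_right[OF bounded_bilinear_blinfun_compose] F.bounded_linear_axioms])
      then have "bounded_linear (\<lambda>h. g y o\<^sub>L f' h o\<^sub>L g y)"
        by (rule bounded_linear_compose[OF bounded_bilinear.bounded_linear_left[OF bounded_bilinear_blinfun_compose]])
      then show ?thesis by (rule bounded_linear_minus)
    qed
    define H where "H z = 2 * M * M * R z + norm (g z - g y) * K * M" for z
    have H0: "(H \<longlongrightarrow> 0) (at y within S)"
    proof -
      have "(H \<longlongrightarrow> 2 * M * M * 0 + norm (g y - g y) * K * M) (at y within S)"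
        unfolding H_def by (intro tendsto_intros R0 gc)
      then show ?thesis by simp
    qed
    have "eventually (\<lambda>z. norm (norm (g z - g y - - (g y o\<^sub>L f' (z - y) o\<^sub>L g y)) / norm (z - y)) \<le> H z) (at y within S)"
      using ev1 ev2
    proof eventually_elim
      case (elim z)
      have eq: "g z - g y - - (g y o\<^sub>L f' (z - y) o\<^sub>L g y) =
          - (g z o\<^sub>L (f z - f y - f' (z - y)) o\<^sub>L g y) - ((g z - g y) o\<^sub>L f' (z - y) o\<^sub>L g y)"
        using ident[OF elim(2)]
        by (simp add: bounded_bilinear.diff_left[OF bounded_bilinear_blinfun_compose]
            bounded_bilinear.diff_right[OF bounded_bilinear_blinfun_compose]
            bounded_bilinear.add_left[OF bounded_bilinear_blinfun_compose]
            bounded_bilinear.add_right[OF bounded_bilinear_blinfun_compose] algebra_simps)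
      have "norm (g z - g y - - (g y o\<^sub>L f' (z - y) o\<^sub>L g y)) \<le>
          norm (g z) * norm (f z - f y - f' (z - y)) * norm (g y) + norm (g z - g y) * norm (f' (z - y)) * norm (g y)"
        unfolding eq
        by (intro order_trans[OF norm_triangle_ineq4] add_mono) (simp_all only: norm_minus_cancel norm_compose3)
      also have "\<dots> \<le> 2 * M * norm (f z - f y - f' (z - y)) * M + norm (g z - g y) * (norm (z - y) * K) * M"
        using gb[OF elim(2,1)] M0 K(1)[of "z - y"] unfolding M_def[symmetric]
        by (intro add_mono mult_right_mono mult_left_mono) auto
      finally have n: "norm (g z - g y - - (g y o\<^sub>L f' (z - y) o\<^sub>L g y)) \<le>
          2 * M * norm (f z - f y - f' (z - y)) * M + norm (g z - g y) * (norm (z - y) * K) * M" .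
      show ?case
      proof (cases "z = y")
        case True then show ?thesis using M0 K by (simp add: H_def R_def)
      next
        case False
        then have np: "norm (z - y) > 0" by simp
        have "norm (g z - g y - - (g y o\<^sub>L f' (z - y) o\<^sub>L g y)) / norm (z - y) \<le>
           (2 * M * norm (f z - f y - f' (z - y)) * M + norm (g z - g y) * (norm (z - y) * K) * M) / norm (z - y)"
          using n np by (intro divide_right_mono) auto
        also have "\<dots> = H z" using np by (simp add: H_def R_def field_simps)
        finally show ?thesis by simp
      qed
    qed
    then show "((\<lambda>z. norm (g z - g y - - (g y o\<^sub>L f' (z - y) o\<^sub>L g y)) / norm (z - y)) \<longlongrightarrow> 0) (at y within S)"
      by (rule Lim_null_comparison) (rule H0)
  qed
qed

lemma smooth_index:
  fixes F :: "'i \<Rightarrow> 'a::real_normed_vector \<Rightarrow> 'b::real_normed_vector"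
  assumes i0: "i0 \<in> I" and cl: "\<And>i v. i \<in> I \<Longrightarrow> dF i v \<in> I"
    and der: "\<And>i x. i \<in> I \<Longrightarrow> x \<in> S \<Longrightarrow> (F i has_derivative (\<lambda>v. F (dF i v) x)) (at x within S)"
    and eq: "\<And>x. x \<in> S \<Longrightarrow> F i0 x = f x"
  shows "smooth_on S f"
proof -
  define idx where "idx = rec_list i0 (\<lambda>v vs r. dF r v)"
  have idx: "idx [] = i0" "\<And>v vs. idx (v#vs) = dF (idx vs) v" by (simp_all add: idx_def)
  have idxI: "idx vs \<in> I" for vs by (induction vs) (simp_all add: idx i0 cl)
  show ?thesis unfolding smooth_on_def
    by (rule exI[of _ "\<lambda>vs. F (idx vs)"]) (auto simp: idx eq intro!: der idxI)
qed

lemma smooth_bounded_index: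
  fixes F :: "'i \<Rightarrow> 'a::euclidean_space \<Rightarrow> 'b::real_normed_vector"
  assumes i0: "i0 \<in> I" and cl: "\<And>i v. i \<in> I \<Longrightarrow> dF i v \<in> I"
    and der: "\<And>i x. i \<in> I \<Longrightarrow> x \<in> S \<Longrightarrow> (F i has_derivative (\<lambda>v. F (dF i v) x)) (at x within S)"
    and eq: "\<And>x. x \<in> S \<Longrightarrow> F i0 x = f x"
    and bd: "\<And>i. i \<in> I \<Longrightarrow> bounded (F i ` S)"
  shows "smooth_bounded_on S f"
proof -
  define idx where "idx = rec_list i0 (\<lambda>v vs r. dF r v)"
  have idx: "idx [] = i0" "\<And>v vs. idx (v#vs) = dF (idx vs) v" by (simp_all add: idx_def)
  have idxI: "idx vs \<in> I" for vs by (induction vs) (simp_all add: idx i0 cl)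
  show ?thesis unfolding smooth_bounded_on_def
    by (rule exI[of _ "\<lambda>vs. F (idx vs)"]) (auto simp: idx eq intro!: der idxI bd)
qed

lemma compose_sum_list_left: "(\<Sum>x\<leftarrow>l. f x) o\<^sub>L b = (\<Sum>x\<leftarrow>l. f x o\<^sub>L b)"
  by (induction l) (simp_all add: bounded_bilinear.add_left[OF bounded_bilinear_blinfun_compose])
lemma compose_sum_list_right: "b o\<^sub>L (\<Sum>x\<leftarrow>l. f x) = (\<Sum>x\<leftarrow>l. b o\<^sub>L f x)"
  by (induction l) (simp_all add: bounded_bilinear.add_right[OF bounded_bilinear_blinfun_compose])
lemma compose_scaleR: "(r *\<^sub>R a) o\<^sub>L b = r *\<^sub>R (a o\<^sub>L b)" "a o\<^sub>L (r *\<^sub>R b) = r *\<^sub>R (a o\<^sub>L b)"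
  by (simp_all add: bounded_bilinear.scaleR_left[OF bounded_bilinear_blinfun_compose]
     bounded_bilinear.scaleR_right[OF bounded_bilinear_blinfun_compose])
lemma compose_minus: "(- a) o\<^sub>L b = - (a o\<^sub>L b)" "a o\<^sub>L (- b) = - (a o\<^sub>L b)"
  by (simp_all add: bounded_bilinear.minus_left[OF bounded_bilinear_blinfun_compose]
     bounded_bilinear.minus_right[OF bounded_bilinear_blinfun_compose])
lemma compose_add: "(a + a') o\<^sub>L b = (a o\<^sub>L b) + (a' o\<^sub>L b)" "a o\<^sub>L (b + b') = (a o\<^sub>L b) + (a o\<^sub>L b')"
  by (simp_all add: bounded_bilinear.add_left[OF bounded_bilinear_blinfun_compose]
     bounded_bilinear.add_right[OF bounded_bilinear_blinfun_compose])

lemma scaleR_sum_list: fixes f :: "'a \<Rightarrow> 'b::real_vector" shows "r *\<^sub>R (\<Sum>x\<leftarrow>l. f x) = (\<Sum>x\<leftarrow>l. r *\<^sub>R f x)"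
  by (induction l) (simp_all add: scaleR_add_right)

lemma linear_expand_list:
  assumes "linear f" "distinct l" "set l = (Basis :: 'a::euclidean_space set)"
  shows "f u = (\<Sum>j\<leftarrow>l. (u \<bullet> j) *\<^sub>R f j)"
proof -
  have "f u = f (\<Sum>j\<in>Basis. (u \<bullet> j) *\<^sub>R j)" by (simp add: euclidean_representation)
  also have "\<dots> = (\<Sum>j\<in>Basis. (u \<bullet> j) *\<^sub>R f j)" using assms(1) by (simp add: linear_sum linear_scale)
  also have "\<dots> = (\<Sum>j\<leftarrow>l. (u \<bullet> j) *\<^sub>R f j)" using assms(2,3) by (metis sum.distinct_set_conv_list)
  finally show ?thesis .
qed

lemma neg_sum_scale: "- (\<Sum>x\<leftarrow>l. a x *\<^sub>R (f x :: 'b::real_vector)) = (\<Sum>x\<leftarrow>l. (- a x) *\<^sub>R f x)"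
  by (induction l) simp_all

locale gen =
  fixes S :: "'a::euclidean_space set" and T :: "'c::euclidean_space set"
    and N :: "'a \<Rightarrow> 'c" and N' :: "'a \<Rightarrow> 'a \<Rightarrow> 'c"
    and DG :: "'c list \<Rightarrow> 'c \<Rightarrow> ('e0::real_normed_vector \<Rightarrow>\<^sub>L 'e1::real_normed_vector)"
    and K :: "('a \<Rightarrow> real) set"
  assumes NT: "\<And>y. y \<in> S \<Longrightarrow> N y \<in> T"
    and Nd: "\<And>y. y \<in> S \<Longrightarrow> (N has_derivative N' y) (at y within S)"
    and DGd: "\<And>vs z. z \<in> T \<Longrightarrow> (DG vs has_derivative (\<lambda>v. DG (v#vs) z)) (at z within T)"
    and inv: "\<And>y. y \<in> S \<Longrightarrow> blinvertible (DG [] (N y))"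
    and K_const: "\<And>a. (\<lambda>y. a) \<in> K"
    and K_mult: "\<And>c1 c2. c1 \<in> K \<Longrightarrow> c2 \<in> K \<Longrightarrow> (\<lambda>y. c1 y * c2 y) \<in> K"
    and K_deriv: "\<And>c. c \<in> K \<Longrightarrow> \<exists>c'. (\<forall>y\<in>S. (c has_derivative c' y) (at y within S)) \<and> (\<forall>v. (\<lambda>y. c' y v) \<in> K)"
    and K_N: "\<And>v j. (\<lambda>y. N' y v \<bullet> j) \<in> K"
begin

definition bl :: "'c list" where "bl = (SOME l. set l = Basis \<and> distinct l)"

lemma bl: "distinct bl" "set bl = Basis"
  using someI_ex[OF finite_distinct_list[OF finite_Basis]] unfolding bl_def by auto

definition Qi :: "'a \<Rightarrow> ('e1 \<Rightarrow>\<^sub>L 'e0)" where "Qi y = blinv (DG [] (N y))"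

fun W :: "'c list list \<Rightarrow> 'a \<Rightarrow> ('e1 \<Rightarrow>\<^sub>L 'e0)" where
  "W [] y = Qi y"
| "W (vs#ws) y = Qi y o\<^sub>L DG vs (N y) o\<^sub>L W ws y"

definition cf :: "'a \<Rightarrow> 'c \<Rightarrow> 'a \<Rightarrow> real" where "cf v j y = N' y v \<bullet> j"

fun dW :: "'c list list \<Rightarrow> 'a \<Rightarrow> (('a \<Rightarrow> real) \<times> 'c list list) list" where
  "dW [] v = map (\<lambda>j. (\<lambda>y. - cf v j y, [[j]])) bl"
| "dW (vs#ws) v = map (\<lambda>j. (\<lambda>y. - cf v j y, [j]#vs#ws)) bl @ map (\<lambda>j. (cf v j, (j#vs)#ws)) bl
     @ map (\<lambda>(c,w). (c, vs#w)) (dW ws v)"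

definition F :: "(('a \<Rightarrow> real) \<times> 'c list list) list \<Rightarrow> 'a \<Rightarrow> ('e1 \<Rightarrow>\<^sub>L 'e0)" where
  "F i y = (\<Sum>(c,w)\<leftarrow>i. c y *\<^sub>R W w y)"

definition Kd :: "('a \<Rightarrow> real) \<Rightarrow> 'a \<Rightarrow> 'a \<Rightarrow> real" where
  "Kd c = (SOME c'. (\<forall>y\<in>S. (c has_derivative c' y) (at y within S)) \<and> (\<forall>v. (\<lambda>y. c' y v) \<in> K))"

lemma Kd: assumes "c \<in> K" shows "\<And>y. y \<in> S \<Longrightarrow> (c has_derivative Kd c y) (at y within S)" "\<And>v. (\<lambda>y. Kd c y v) \<in> K"
  using someI_ex[OF K_deriv[OF assms]] unfolding Kd_def by auto

definition tF :: "('a \<Rightarrow> real) \<times> 'c list list \<Rightarrow> 'a \<Rightarrow> (('a \<Rightarrow> real) \<times> 'c list list) list" where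
  "tF t v = (case t of (c,w) \<Rightarrow> (\<lambda>y. Kd c y v, w) # map (\<lambda>(c2,w2). (\<lambda>y. c y * c2 y, w2)) (dW w v))"

definition dF :: "(('a \<Rightarrow> real) \<times> 'c list list) list \<Rightarrow> 'a \<Rightarrow> (('a \<Rightarrow> real) \<times> 'c list list) list" where
  "dF i v = concat (map (\<lambda>t. tF t v) i)"

lemma F_simps: "F [] y = 0" "F ((c,w)#i) y = c y *\<^sub>R W w y + F i y" "F (a @ b) y = F a y + F b y"
  by (simp_all add: F_def)

lemma F_prefix: "F (map (\<lambda>(c,w). (c, vs#w)) l) y = Qi y o\<^sub>L DG vs (N y) o\<^sub>L F l y"
  by (induction l) (auto simp: F_def compose_add compose_scaleR)

lemma F_scale: "F (map (\<lambda>(c2,w2). (\<lambda>y. c y * c2 y, w2)) l) y = c y *\<^sub>R F l y"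
  by (induction l) (auto simp: F_def scaleR_add_right)

lemma W_append: "W (w @ vs # ws) y = W w y o\<^sub>L DG vs (N y) o\<^sub>L W ws y"
  by (induction w) (simp_all add: blinfun_compose_assoc')

lemma DG_expand: assumes "z \<in> T" shows "DG (u#vs) z = (\<Sum>j\<leftarrow>bl. (u \<bullet> j) *\<^sub>R DG (j#vs) z)"
proof -
  have "linear (\<lambda>v. DG (v#vs) z)"
    using has_derivative_bounded_linear[OF DGd[OF assms]] bounded_linear.linear by blast
  from linear_expand_list[OF this bl] show ?thesis .
qed

lemma DGN_deriv: assumes "y \<in> S"
  shows "((\<lambda>y. DG vs (N y)) has_derivative (\<lambda>h. DG (N' y h # vs) (N y))) (at y within S)"
  using has_derivative_in_compose2[of T "DG vs" "\<lambda>z v. DG (v#vs) z" N S y "N' y"] DGd NT Nd assms by auto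

lemma Qi_deriv: assumes "y \<in> S"
  shows "(Qi has_derivative (\<lambda>h. F (dW [] h) y)) (at y within S)"
proof -
  have "(Qi has_derivative (\<lambda>h. - (Qi y o\<^sub>L DG [N' y h] (N y) o\<^sub>L Qi y))) (at y within S)"
    unfolding Qi_def[abs_def] by (rule blinv_has_derivative[OF DGN_deriv[OF assms]]) (use inv assms in auto)
  moreover have "- (Qi y o\<^sub>L DG [N' y h] (N y) o\<^sub>L Qi y) = F (dW [] h) y" for h
  proof -
    have 1: "F (dW [] h) y = (\<Sum>j\<leftarrow>bl. (- cf h j y) *\<^sub>R (Qi y o\<^sub>L DG [j] (N y) o\<^sub>L Qi y))"
      by (simp add: F_def o_def)
    have 2: "Qi y o\<^sub>L DG [N' y h] (N y) o\<^sub>L Qi y = (\<Sum>j\<leftarrow>bl. (cf h j y) *\<^sub>R (Qi y o\<^sub>L DG [j] (N y) o\<^sub>L Qi y))"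
      unfolding DG_expand[OF NT[OF assms], of "N' y h" "[]"] cf_def
      by (simp only: compose_sum_list_left compose_sum_list_right compose_scaleR map_map o_def)
    show ?thesis unfolding 1 2 neg_sum_scale ..
  qed
  ultimately show ?thesis by simp
qed

lemma F_map: "F (map (\<lambda>j. (c j, w j)) l) y = (\<Sum>j\<leftarrow>l. c j y *\<^sub>R W (w j) y)"
  by (simp add: F_def o_def)

lemma W_deriv: assumes "y \<in> S"
  shows "(W ws has_derivative (\<lambda>h. F (dW ws h) y)) (at y within S)"
proof (induction ws)
  case Nil
  have "W [] = Qi" by (rule ext) simp
  then show ?case using Qi_deriv[OF assms] by simp
next
  case (Cons vs ws)
  have bb: "bounded_bilinear (o\<^sub>L)" by (rule bounded_bilinear_blinfun_compose)
  have d1: "((\<lambda>y. Qi y o\<^sub>L DG vs (N y)) has_derivative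
      (\<lambda>h. (Qi y o\<^sub>L DG (N' y h # vs) (N y)) + (F (dW [] h) y o\<^sub>L DG vs (N y)))) (at y within S)"
    by (rule bounded_bilinear.FDERIV[OF bb Qi_deriv[OF assms] DGN_deriv[OF assms]])
  have d2: "((\<lambda>y. Qi y o\<^sub>L DG vs (N y) o\<^sub>L W ws y) has_derivative
      (\<lambda>h. ((Qi y o\<^sub>L DG vs (N y)) o\<^sub>L F (dW ws h) y) +
           (((Qi y o\<^sub>L DG (N' y h # vs) (N y)) + (F (dW [] h) y o\<^sub>L DG vs (N y))) o\<^sub>L W ws y))) (at y within S)"
    by (rule bounded_bilinear.FDERIV[OF bb d1 Cons])
  have eqW: "W (vs#ws) = (\<lambda>y. Qi y o\<^sub>L DG vs (N y) o\<^sub>L W ws y)" by (rule ext) simp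
  have eq: "((Qi y o\<^sub>L DG vs (N y)) o\<^sub>L F (dW ws h) y) +
           (((Qi y o\<^sub>L DG (N' y h # vs) (N y)) + (F (dW [] h) y o\<^sub>L DG vs (N y))) o\<^sub>L W ws y)
        = F (dW (vs#ws) h) y" for h
  proof -
    have A: "F (map (\<lambda>j. (\<lambda>y. - cf h j y, [j]#vs#ws)) bl) y = F (dW [] h) y o\<^sub>L DG vs (N y) o\<^sub>L W ws y"
    proof -
      have "F (map (\<lambda>j. (\<lambda>y. - cf h j y, [j]#vs#ws)) bl) y = (\<Sum>j\<leftarrow>bl. (- cf h j y) *\<^sub>R W ([[j]] @ vs#ws) y)"
        by (simp add: F_map)
      also have "\<dots> = (\<Sum>j\<leftarrow>bl. (- cf h j y) *\<^sub>R (W [[j]] y o\<^sub>L DG vs (N y) o\<^sub>L W ws y))"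
        by (simp only: W_append)
      also have "\<dots> = F (dW [] h) y o\<^sub>L DG vs (N y) o\<^sub>L W ws y"
        unfolding dW.simps F_map by (simp only: compose_sum_list_left compose_scaleR map_map o_def)
      finally show ?thesis .
    qed
    have B: "F (map (\<lambda>j. (cf h j, (j#vs)#ws)) bl) y = Qi y o\<^sub>L DG (N' y h # vs) (N y) o\<^sub>L W ws y"
    proof -
      have "F (map (\<lambda>j. (cf h j, (j#vs)#ws)) bl) y = (\<Sum>j\<leftarrow>bl. cf h j y *\<^sub>R (Qi y o\<^sub>L DG (j#vs) (N y) o\<^sub>L W ws y))"
        by (simp add: F_map)
      also have "\<dots> = Qi y o\<^sub>L DG (N' y h # vs) (N y) o\<^sub>L W ws y"
        unfolding DG_expand[OF NT[OF assms], of "N' y h" vs] cf_def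
        by (simp only: compose_sum_list_left compose_sum_list_right compose_scaleR map_map o_def)
      finally show ?thesis .
    qed
    show ?thesis
      unfolding dW.simps F_simps(3) A B F_prefix
      by (simp add: compose_add algebra_simps)
  qed
  show ?case unfolding eqW eq[symmetric] by (rule d2)
qed

lemma F_deriv: assumes "y \<in> S" "\<forall>t\<in>set i. fst t \<in> K"
  shows "(F i has_derivative (\<lambda>h. F (dF i h) y)) (at y within S)"
  using assms(2)
proof (induction i)
  case Nil
  have "F [] = (\<lambda>y. 0)" by (rule ext) (simp add: F_simps)
  then show ?case by (simp add: dF_def F_simps)
next
  case (Cons t i)
  obtain c w where t: "t = (c,w)" by force
  have cK: "c \<in> K" using Cons.prems t by auto
  have IH: "(F i has_derivative (\<lambda>h. F (dF i h) y)) (at y within S)" using Cons by auto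
  have eqF: "F (t#i) = (\<lambda>y. c y *\<^sub>R W w y + F i y)" by (rule ext) (simp add: F_simps t)
  have d: "((\<lambda>y. c y *\<^sub>R W w y + F i y) has_derivative
      (\<lambda>h. (c y *\<^sub>R F (dW w h) y + Kd c y h *\<^sub>R W w y) + F (dF i h) y)) (at y within S)"
    by (intro has_derivative_add has_derivative_scaleR Kd(1)[OF cK assms(1)] W_deriv[OF assms(1)] IH)
  have eq: "(c y *\<^sub>R F (dW w h) y + Kd c y h *\<^sub>R W w y) + F (dF i h) y = F (dF (t#i) h) y" for h
    by (simp add: dF_def tF_def t F_simps F_scale)
  show ?case unfolding eqF eq[symmetric] by (rule d)
qed

definition II :: "(('a \<Rightarrow> real) \<times> 'c list list) list set" where
  "II = {i. \<forall>t\<in>set i. fst t \<in> K \<and> (\<forall>vs\<in>set (snd t). set vs \<subseteq> Basis)}"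

lemma dW_II: "\<forall>vs\<in>set w. set vs \<subseteq> Basis \<Longrightarrow> dW w v \<in> II"
proof (induction w)
  case Nil
  have "(\<lambda>y. - cf v j y) \<in> K" for j
    using K_mult[OF K_const[of "-1"] K_N[of v j]] by (simp add: cf_def)
  then show ?case using bl by (auto simp: II_def)
next
  case (Cons vs ws)
  have "(\<lambda>y. - cf v j y) \<in> K" "cf v j \<in> K" for j
    using K_mult[OF K_const[of "-1"] K_N[of v j]] K_N[of v j] by (simp_all add: cf_def[abs_def])
  then show ?case using bl Cons by (auto simp: II_def subset_iff)
qed

lemma dF_II: assumes "i \<in> II" shows "dF i v \<in> II"
proof -
  have "tF t v \<in> II" if "t \<in> set i" for t
  proof -
    obtain c w where t: "t = (c,w)" by force
    have cK: "c \<in> K" and wB: "\<forall>vs\<in>set w. set vs \<subseteq> Basis" using assms that t by (auto simp: II_def)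
    have "dW w v \<in> II" by (rule dW_II[OF wB])
    then show ?thesis using Kd(2)[OF cK, of v] cK wB
      by (auto simp: tF_def t II_def subset_iff intro!: K_mult)
  qed
  then show ?thesis by (auto simp: dF_def II_def)
qed

theorem gen_smooth: "smooth_on S (\<lambda>y. blinv (DG [] (N y)))"
proof (rule smooth_index[of "[(\<lambda>y. 1, [])]" II dF S F])
  show "[(\<lambda>y. 1, [])] \<in> II" by (simp add: II_def K_const)
  show "\<And>i v. i \<in> II \<Longrightarrow> dF i v \<in> II" by (rule dF_II)
  show "\<And>i x. i \<in> II \<Longrightarrow> x \<in> S \<Longrightarrow> (F i has_derivative (\<lambda>v. F (dF i v) x)) (at x within S)"
    by (rule F_deriv) (auto simp: II_def)
  show "\<And>x. x \<in> S \<Longrightarrow> F [(\<lambda>y. 1, [])] x = blinv (DG [] (N x))"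
    by (simp add: F_simps Qi_def)
qed

theorem gen_smooth_bounded:
  assumes bQ: "bounded (Qi ` S)" and bDG: "\<And>vs. set vs \<subseteq> Basis \<Longrightarrow> bounded (DG vs ` T)"
    and bK: "\<And>c. c \<in> K \<Longrightarrow> bounded (c ` S)"
  shows "smooth_bounded_on S (\<lambda>y. blinv (DG [] (N y)))"
proof (rule smooth_bounded_index[of "[(\<lambda>y. 1, [])]" II dF S F])
  show "[(\<lambda>y. 1, [])] \<in> II" by (simp add: II_def K_const)
  show "\<And>i v. i \<in> II \<Longrightarrow> dF i v \<in> II" by (rule dF_II)
  show "\<And>i x. i \<in> II \<Longrightarrow> x \<in> S \<Longrightarrow> (F i has_derivative (\<lambda>v. F (dF i v) x)) (at x within S)"
    by (rule F_deriv) (auto simp: II_def)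
  show "\<And>x. x \<in> S \<Longrightarrow> F [(\<lambda>y. 1, [])] x = blinv (DG [] (N x))"
    by (simp add: F_simps Qi_def)
  obtain BQ where BQ: "\<And>y. y \<in> S \<Longrightarrow> norm (Qi y) \<le> BQ" "BQ > 0" using bQ unfolding bounded_pos by blast
  have Wb: "\<exists>B\<ge>0. \<forall>y\<in>S. norm (W w y) \<le> B" if "\<forall>vs\<in>set w. set vs \<subseteq> Basis" for w
    using that
  proof (induction w)
    case Nil then show ?case using BQ by (intro exI[of _ BQ]) auto
  next
    case (Cons vs ws)
    obtain B1 where B1: "\<forall>y\<in>S. norm (W ws y) \<le> B1" "B1 \<ge> 0" using Cons by auto
    have vsB: "set vs \<subseteq> Basis" using Cons.prems by simp
    obtain B2 where B2: "\<And>z. z \<in> T \<Longrightarrow> norm (DG vs z) \<le> B2" "B2 > 0" using bDG[OF vsB] unfolding bounded_pos by auto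
    have "norm (W (vs#ws) y) \<le> BQ * B2 * B1" if "y \<in> S" for y
    proof -
      have "norm (W (vs#ws) y) \<le> norm (Qi y) * norm (DG vs (N y)) * norm (W ws y)"
        by (simp add: norm_compose3)
      also have "\<dots> \<le> BQ * B2 * B1"
        using BQ(1)[OF that] B2(1)[OF NT[OF that]] B1 that BQ(2) B2(2)
        by (intro mult_mono) auto
      finally show ?thesis .
    qed
    then show ?case using BQ(2) B2(2) B1(2) by (intro exI[of _ "BQ * B2 * B1"]) auto
  qed
  show "bounded (F i ` S)" if "i \<in> II" for i
    using that
  proof (induction i)
    case Nil
    have "(\<lambda>x. 0::'e1 \<Rightarrow>\<^sub>L 'e0) ` S \<subseteq> {0}" by auto
    moreover have "bounded {0::'e1 \<Rightarrow>\<^sub>L 'e0}" by simp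
    ultimately have "bounded ((\<lambda>x. 0::'e1 \<Rightarrow>\<^sub>L 'e0) ` S)" by (rule bounded_subset[rotated])
    then show ?case by (simp add: F_simps)
  next
    case (Cons t i)
    obtain c w where t: "t = (c,w)" by force
    have cK: "c \<in> K" and wB: "\<forall>vs\<in>set w. set vs \<subseteq> Basis" and iI: "i \<in> II"
      using Cons.prems t by (auto simp: II_def)
    obtain B1 where B1: "\<forall>y\<in>S. norm (W w y) \<le> B1" "B1 \<ge> 0" using Wb[OF wB] by auto
    obtain B2 where B2: "\<And>y. y \<in> S \<Longrightarrow> norm (c y) \<le> B2" "B2 > 0" using bK[OF cK] unfolding bounded_pos by blast
    obtain B3 where B3: "\<And>y. y \<in> S \<Longrightarrow> norm (F i y) \<le> B3" using Cons.IH[OF iI] unfolding bounded_iff by auto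
    have "norm (F (t#i) y) \<le> B2 * B1 + B3" if "y \<in> S" for y
    proof -
      have "norm (F (t#i) y) \<le> \<bar>c y\<bar> * norm (W w y) + norm (F i y)"
        by (simp add: F_simps t norm_triangle_le)
      also have "\<dots> \<le> B2 * B1 + B3"
        using B1 B2(1)[OF that] B2(2) B3[OF that] that
        by (intro add_mono mult_mono) auto
      finally show ?thesis .
    qed
    then show ?case unfolding bounded_iff by blast
  qed
qed

end

inductive_set Kc :: "((real^'n) \<times> real \<times> (real^'n) \<Rightarrow> real) set" where
  kc_const: "(\<lambda>y. a) \<in> Kc"
| kc_lin: "(\<lambda>y. snd (snd y) \<bullet> u) \<in> Kc"
| kc_inv: "(\<lambda>y. inverse (norm (snd (snd y)))) \<in> Kc"
| kc_add: "c1 \<in> Kc \<Longrightarrow> c2 \<in> Kc \<Longrightarrow> (\<lambda>y. c1 y + c2 y) \<in> Kc"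
| kc_mult: "c1 \<in> Kc \<Longrightarrow> c2 \<in> Kc \<Longrightarrow> (\<lambda>y. c1 y * c2 y) \<in> Kc"

lemma inv_norm_deriv:
  fixes y :: "(real^'n) \<times> real \<times> (real^'n)"
  assumes "snd (snd y) \<noteq> 0"
  shows "((\<lambda>y. inverse (norm (snd (snd y)))) has_derivative
     (\<lambda>v. - (inverse (norm (snd (snd y))) * (sgn (snd (snd y)) \<bullet> snd (snd v)) * inverse (norm (snd (snd y)))))) (at y)"
proof -
  have s: "((\<lambda>y. snd (snd y)) has_derivative (\<lambda>v. snd (snd v))) (at y)"
    by (intro derivative_intros)
  have n: "((\<lambda>y. norm (snd (snd y))) has_derivative (\<lambda>v. sgn (snd (snd y)) \<bullet> snd (snd v))) (at y)"
    using has_derivative_compose[OF s has_derivative_norm[OF assms]] by (simp add: inner_commute)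
  show ?thesis using Deriv.has_derivative_inverse[OF _ n] assms by simp
qed

lemma Kc_deriv:
  fixes c :: "(real^'n) \<times> real \<times> (real^'n) \<Rightarrow> real"
  assumes "c \<in> Kc"
  shows "\<exists>c'. (\<forall>y. snd (snd y) \<noteq> 0 \<longrightarrow> (c has_derivative c' y) (at y)) \<and> (\<forall>v. (\<lambda>y. c' y v) \<in> Kc)"
  using assms
proof induction
  case (kc_const a)
  show ?case by (rule exI[of _ "\<lambda>y v. 0"]) (simp add: Kc.kc_const)
next
  case (kc_lin u)
  have "((\<lambda>y. snd (snd y) \<bullet> u) has_derivative (\<lambda>v. snd (snd v) \<bullet> u)) (at y)" for y :: "(real^'n) \<times> real \<times> (real^'n)"
    by (rule bounded_linear_imp_has_derivative, rule bounded_linear_compose[OF bounded_linear_inner_left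
        bounded_linear_compose[OF bounded_linear_snd bounded_linear_snd]])
  then show ?case by (intro exI[of _ "\<lambda>y v. snd (snd v) \<bullet> u"]) (simp add: Kc.kc_const)
next
  case kc_inv
  have m: "(\<lambda>y. - (inverse (norm (snd (snd y))) * (sgn (snd (snd y)) \<bullet> snd (snd v)) * inverse (norm (snd (snd y))))) \<in> Kc" for v :: "(real^'n) \<times> real \<times> (real^'n)"
  proof -
    have "(\<lambda>y. - (inverse (norm (snd (snd y))) * (sgn (snd (snd y)) \<bullet> snd (snd v)) * inverse (norm (snd (snd y))))) =
      (\<lambda>y. (-1) * (inverse (norm (snd (snd y))) * (inverse (norm (snd (snd y))) * (inverse (norm (snd (snd y))) * (snd (snd y) \<bullet> snd (snd v))))))"
    proof -
      have e: "\<And>y. sgn (snd (snd y)) \<bullet> snd (snd v) = inverse (norm (snd (snd y))) * (snd (snd y) \<bullet> snd (snd v))"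
        unfolding sgn_div_norm divide_inverse_commute inner_scaleR_left ..
      show ?thesis unfolding e by (simp only: mult_ac mult_minus1)
    qed
    also have "\<dots> \<in> Kc" by (intro Kc.kc_mult Kc.kc_const Kc.kc_inv Kc.kc_lin)
    finally show ?thesis .
  qed
  show ?case
    by (rule exI[of _ "\<lambda>y v. - (inverse (norm (snd (snd y))) * (sgn (snd (snd y)) \<bullet> snd (snd v)) * inverse (norm (snd (snd y))))"])
      (intro conjI allI impI inv_norm_deriv m)
next
  case (kc_add c1 c2)
  obtain d1 where d1: "\<forall>y. snd (snd y) \<noteq> 0 \<longrightarrow> (c1 has_derivative d1 y) (at y)" "\<forall>v. (\<lambda>y. d1 y v) \<in> Kc"
    using kc_add.IH(1) by (elim exE conjE)
  obtain d2 where d2: "\<forall>y. snd (snd y) \<noteq> 0 \<longrightarrow> (c2 has_derivative d2 y) (at y)" "\<forall>v. (\<lambda>y. d2 y v) \<in> Kc"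
    using kc_add.IH(2) by (elim exE conjE)
  have "((\<lambda>y. c1 y + c2 y) has_derivative (\<lambda>v. d1 y v + d2 y v)) (at y)" if "snd (snd y) \<noteq> 0" for y
    using has_derivative_add[OF d1(1)[rule_format, OF that] d2(1)[rule_format, OF that]] .
  then have A: "\<forall>y. snd (snd y) \<noteq> 0 \<longrightarrow> ((\<lambda>y. c1 y + c2 y) has_derivative (\<lambda>v. d1 y v + d2 y v)) (at y)" by blast
  have B: "\<forall>v. (\<lambda>y. d1 y v + d2 y v) \<in> Kc"
    by (intro allI Kc.kc_add[OF d1(2)[rule_format] d2(2)[rule_format]])
  show ?case by (rule exI[of _ "\<lambda>y v. d1 y v + d2 y v"], rule conjI[OF A B])
next
  case (kc_mult c1 c2)
  obtain d1 where d1: "\<forall>y. snd (snd y) \<noteq> 0 \<longrightarrow> (c1 has_derivative d1 y) (at y)" "\<forall>v. (\<lambda>y. d1 y v) \<in> Kc"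
    using kc_mult.IH(1) by (elim exE conjE)
  obtain d2 where d2: "\<forall>y. snd (snd y) \<noteq> 0 \<longrightarrow> (c2 has_derivative d2 y) (at y)" "\<forall>v. (\<lambda>y. d2 y v) \<in> Kc"
    using kc_mult.IH(2) by (elim exE conjE)
  have "((\<lambda>y. c1 y * c2 y) has_derivative (\<lambda>v. c1 y * d2 y v + d1 y v * c2 y)) (at y)" if "snd (snd y) \<noteq> 0" for y
    using has_derivative_mult[OF d1(1)[rule_format, OF that] d2(1)[rule_format, OF that]] .
  then have A: "\<forall>y. snd (snd y) \<noteq> 0 \<longrightarrow> ((\<lambda>y. c1 y * c2 y) has_derivative (\<lambda>v. c1 y * d2 y v + d1 y v * c2 y)) (at y)" by blast
  have B: "\<forall>v. (\<lambda>y. c1 y * d2 y v + d1 y v * c2 y) \<in> Kc"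
    by (intro allI Kc.kc_add[OF Kc.kc_mult[OF kc_mult.hyps(1) d2(2)[rule_format]] Kc.kc_mult[OF d1(2)[rule_format] kc_mult.hyps(2)]])
  show ?case by (rule exI[of _ "\<lambda>y v. c1 y * d2 y v + d1 y v * c2 y"], rule conjI[OF A B])
qed

lemma Kc_bounded:
  fixes c :: "(real^'n) \<times> real \<times> (real^'n) \<Rightarrow> real"
  assumes "c \<in> Kc"
  shows "\<exists>B. \<forall>y \<in> UNIV \<times> {0..1} \<times> annulus TYPE('n). \<bar>c (y :: (real^'n) \<times> real \<times> (real^'n))\<bar> \<le> B"
  using assms
proof induction
  case (kc_const a) then show ?case by auto
next
  case (kc_lin u)
  have "\<bar>snd (snd y) \<bullet> u\<bar> \<le> 2 * norm u" if "y \<in> UNIV \<times> {0..1} \<times> annulus TYPE('n)" for y :: "(real^'n) \<times> real \<times> (real^'n)"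
  proof -
    have "norm (snd (snd y)) < 2" using that by (auto simp: annulus_def)
    then have "norm (snd (snd y)) * norm u \<le> 2 * norm u" by (intro mult_right_mono) auto
    then show ?thesis using Cauchy_Schwarz_ineq2[of "snd (snd y)" u] by linarith
  qed
  then show ?case by blast
next
  case kc_inv
  have "\<bar>inverse (norm (snd (snd y)))\<bar> \<le> 2" if "y \<in> UNIV \<times> {0..1} \<times> annulus TYPE('n)" for y :: "(real^'n) \<times> real \<times> (real^'n)"
  proof -
    have h: "norm (snd (snd y)) > 1/2" using that by (auto simp: annulus_def)
    then have "inverse (norm (snd (snd y))) < inverse (1/2)" by (intro less_imp_inverse_less) auto
    then show ?thesis using h by simp
  qed
  then show ?case by blast
next
  case (kc_add c1 c2)
  then obtain B1 B2 where "\<forall>y \<in> UNIV \<times> {0..1} \<times> annulus TYPE('n). \<bar>c1 y\<bar> \<le> B1"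
     "\<forall>y \<in> UNIV \<times> {0..1} \<times> annulus TYPE('n). \<bar>c2 y\<bar> \<le> B2" by blast
  then have "\<bar>c1 y + c2 y\<bar> \<le> B1 + B2" if "y \<in> UNIV \<times> {0..1} \<times> annulus TYPE('n)" for y
  proof -
    have "\<bar>c1 y\<bar> \<le> B1" "\<bar>c2 y\<bar> \<le> B2" using \<open>\<forall>y\<in>_. \<bar>c1 y\<bar> \<le> B1\<close> \<open>\<forall>y\<in>_. \<bar>c2 y\<bar> \<le> B2\<close> that by auto
    then show ?thesis using abs_triangle_ineq[of "c1 y" "c2 y"] by linarith
  qed
  then show ?case by blast
next
  case (kc_mult c1 c2)
  then obtain B1 B2 where b: "\<forall>y \<in> UNIV \<times> {0..1} \<times> annulus TYPE('n). \<bar>c1 y\<bar> \<le> B1"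
     "\<forall>y \<in> UNIV \<times> {0..1} \<times> annulus TYPE('n). \<bar>c2 y\<bar> \<le> B2" by blast
  have "\<bar>c1 y * c2 y\<bar> \<le> B1 * B2" if "y \<in> UNIV \<times> {0..1} \<times> annulus TYPE('n)" for y
  proof -
    have "\<bar>c1 y\<bar> \<le> B1" "\<bar>c2 y\<bar> \<le> B2" using b that by auto
    then show ?thesis unfolding abs_mult by (intro mult_mono) auto
  qed
  then show ?case by blast
qed

lemma smooth_on_cong: "smooth_on S f \<Longrightarrow> (\<And>x. x \<in> S \<Longrightarrow> f x = g x) \<Longrightarrow> smooth_on S g"
  unfolding smooth_on_def by metis

theorem lemma3p15:
  fixes p :: "real^'n \<Rightarrow> real^'n \<Rightarrow> real \<Rightarrow> ('e0::{real_inner,complete_space} \<Rightarrow>\<^sub>L 'e1::{real_inner,complete_space})"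
    and d \<nu> :: real
  assumes hp: "p \<in> S_Hom d \<nu>"
    and inv1: "\<forall>x \<xi> \<mu>. \<xi> \<noteq> 0 \<and> 0 \<le> \<mu> \<longrightarrow> blinvertible (p x \<xi> \<mu>)"
    and bd1: "\<exists>C. \<forall>x \<xi> \<mu>. \<xi> \<noteq> 0 \<and> 0 \<le> \<mu> \<and> (norm \<xi>)\<^sup>2 + \<mu>\<^sup>2 = 1 \<longrightarrow>
                 norm (norm \<xi> powr \<nu> *\<^sub>R blinv (p x \<xi> \<mu>)) \<le> C"
    and inv2: "\<forall>x \<xi>. \<xi> \<noteq> 0 \<longrightarrow> blinvertible (principal_angular_symbol \<nu> p x \<xi>)"
    and bd2: "\<exists>C. \<forall>x \<xi>. norm \<xi> = 1 \<longrightarrow> norm (blinv (principal_angular_symbol \<nu> p x \<xi>)) \<le> C"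
  shows "(\<lambda>x \<xi> \<mu>. blinv (p x \<xi> \<mu>)) \<in> S_Hom (-d) (-\<nu>)"
proof -
  define S1 :: "((real^'n) \<times> (real^'n) \<times> real) set" where "S1 = UNIV \<times> (UNIV - {0}) \<times> {0..}"
  define S2 :: "((real^'n) \<times> real \<times> (real^'n)) set" where "S2 = UNIV \<times> {0..1} \<times> annulus TYPE('n)"
  have sm: "smooth_on S1 (\<lambda>(x, \<xi>, \<mu>). p x \<xi> \<mu>)"
    and hom: "\<And>x \<xi> \<mu> t. \<xi> \<noteq> 0 \<Longrightarrow> 0 \<le> \<mu> \<Longrightarrow> 0 < t \<Longrightarrow> p x (t *\<^sub>R \<xi>) (t * \<mu>) = t powr d *\<^sub>R p x \<xi> \<mu>"
    and qex: "\<exists>q :: (real^'n) \<times> real \<times> (real^'n) \<Rightarrow> ('e0 \<Rightarrow>\<^sub>L 'e1). smooth_bounded_on S2 q \<and>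
        (\<forall>x r \<phi>. 0 < r \<and> r \<le> 1 \<and> norm \<phi> = 1 \<longrightarrow> q (x, r, \<phi>) = r powr (-\<nu>) *\<^sub>R p x (r *\<^sub>R \<phi>) (sqrt (1 - r\<^sup>2)))"
    using hp unfolding S_Hom_def S1_def S2_def by auto
  obtain C1 where C1: "\<And>x \<xi> \<mu>. \<xi> \<noteq> 0 \<Longrightarrow> 0 \<le> \<mu> \<Longrightarrow> (norm \<xi>)\<^sup>2 + \<mu>\<^sup>2 = 1 \<Longrightarrow>
                 norm (norm \<xi> powr \<nu> *\<^sub>R blinv (p x \<xi> \<mu>)) \<le> C1" using bd1 by blast
  obtain C2 where C2: "\<And>x \<xi>. norm \<xi> = 1 \<Longrightarrow> norm (blinv (principal_angular_symbol \<nu> p x \<xi>)) \<le> C2" using bd2 by blast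

  obtain Dp where Dp0: "\<forall>y\<in>S1. Dp [] y = (\<lambda>(x, \<xi>, \<mu>). p x \<xi> \<mu>) y"
    and Dpd: "\<forall>vs. \<forall>y\<in>S1. (Dp vs has_derivative (\<lambda>v. Dp (v#vs) y)) (at y within S1)"
    using sm unfolding smooth_on_def by blast
  interpret GA: gen S1 S1 "\<lambda>y. y" "\<lambda>y v. v" Dp "range (\<lambda>a. \<lambda>y::((real^'n) \<times> (real^'n) \<times> real). a)"
  proof unfold_locales
    show "\<And>y. y \<in> S1 \<Longrightarrow> y \<in> S1" .
    show "((\<lambda>y. y) has_derivative (\<lambda>v. v)) (at y within S1)" for y by (rule has_derivative_ident)
    show "(Dp vs has_derivative (\<lambda>v. Dp (v#vs) z)) (at z within S1)" if "z \<in> S1" for vs z using Dpd that by blast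
    show "blinvertible (Dp [] y)" if "y \<in> S1" for y
      using that Dp0 inv1 unfolding S1_def by (cases y) auto
    show "(\<lambda>y. a) \<in> range (\<lambda>a. \<lambda>y::((real^'n) \<times> (real^'n) \<times> real). a)" for a by auto
    show "(\<lambda>y. c1 y * c2 y) \<in> range (\<lambda>a. \<lambda>y::((real^'n) \<times> (real^'n) \<times> real). a)"
      if "c1 \<in> range (\<lambda>a. \<lambda>y::((real^'n) \<times> (real^'n) \<times> real). a)" "c2 \<in> range (\<lambda>a. \<lambda>y::((real^'n) \<times> (real^'n) \<times> real). a)" for c1 c2
      using that by auto
    show "\<exists>c'. (\<forall>y\<in>S1. (c has_derivative c' y) (at y within S1)) \<and> (\<forall>v. (\<lambda>y. c' y v) \<in> range (\<lambda>a. \<lambda>y::((real^'n) \<times> (real^'n) \<times> real). a))"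
      if "c \<in> range (\<lambda>a. \<lambda>y::((real^'n) \<times> (real^'n) \<times> real). a)" for c
      using that by (intro exI[of _ "\<lambda>y v. 0"]) auto
    show "(\<lambda>y. v \<bullet> j) \<in> range (\<lambda>a. \<lambda>y::((real^'n) \<times> (real^'n) \<times> real). a)" for v j :: "(real^'n) \<times> (real^'n) \<times> real"
      by auto
  qed
  have smA: "smooth_on S1 (\<lambda>(x, \<xi>, \<mu>). blinv (p x \<xi> \<mu>))"
    by (rule smooth_on_cong[OF GA.gen_smooth]) (use Dp0 in auto)

  have homA: "blinv (p x (t *\<^sub>R \<xi>) (t * \<mu>)) = t powr (-d) *\<^sub>R blinv (p x \<xi> \<mu>)"
    if "\<xi> \<noteq> 0" "0 \<le> \<mu>" "0 < t" for x \<xi> \<mu> t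
  proof -
    have "blinv (p x (t *\<^sub>R \<xi>) (t * \<mu>)) = blinv (t powr d *\<^sub>R p x \<xi> \<mu>)" using hom that by simp
    also have "\<dots> = inverse (t powr d) *\<^sub>R blinv (p x \<xi> \<mu>)"
      using blinv_scaleR(1)[of "p x \<xi> \<mu>" "t powr d"] inv1 that by auto
    finally show ?thesis by (simp add: powr_minus)
  qed

  obtain q :: "(real^'n) \<times> real \<times> (real^'n) \<Rightarrow> ('e0 \<Rightarrow>\<^sub>L 'e1)" where qsb: "smooth_bounded_on S2 q"
    and qf: "\<And>x r \<phi>. 0 < r \<Longrightarrow> r \<le> 1 \<Longrightarrow> norm \<phi> = 1 \<Longrightarrow> q (x, r, \<phi>) = r powr (-\<nu>) *\<^sub>R p x (r *\<^sub>R \<phi>) (sqrt (1 - r\<^sup>2))"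
    using qex by blast
  obtain Dq where Dq0: "\<forall>y\<in>S2. Dq [] y = q y"
    and Dqd: "\<forall>vs. \<forall>y\<in>S2. (Dq vs has_derivative (\<lambda>v. Dq (v#vs) y)) (at y within S2)"
    and Dqb: "\<forall>vs \<in> lists Basis. bounded (Dq vs ` S2)"
    using qsb unfolding smooth_bounded_on_def by blast
  define C where "C = max C1 C2"
  have key: "blinvertible (Dq [] (x, r, \<psi>)) \<and> norm (blinv (Dq [] (x, r, \<psi>))) \<le> C"
    if "0 \<le> r" "r \<le> 1" "norm \<psi> = 1" for x r \<psi>
  proof (cases "r = 0")
    case False
    then have r0: "0 < r" using that by simp
    have inS: "(x, r, \<psi>) \<in> S2" using that by (simp add: S2_def annulus_def)
    have Dqe: "Dq [] (x, r, \<psi>) = r powr (-\<nu>) *\<^sub>R p x (r *\<^sub>R \<psi>) (sqrt (1 - r\<^sup>2))"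
      using Dq0 inS qf[OF r0 that(2,3)] by simp
    have nz: "r *\<^sub>R \<psi> \<noteq> 0" using r0 that(3) by auto
    have sq: "0 \<le> sqrt (1 - r\<^sup>2)" using that by (simp add: power_le_one)
    have P: "blinvertible (p x (r *\<^sub>R \<psi>) (sqrt (1 - r\<^sup>2)))" using inv1 nz sq by blast
    have cn: "r powr (-\<nu>) \<noteq> 0" using r0 by simp
    have n1: "norm (r *\<^sub>R \<psi>) = r" using r0 that(3) by simp
    have n2: "(norm (r *\<^sub>R \<psi>))\<^sup>2 + (sqrt (1 - r\<^sup>2))\<^sup>2 = 1"
      unfolding n1 using that by (simp add: power_le_one)
    have "norm (blinv (Dq [] (x, r, \<psi>))) = norm (r powr \<nu> *\<^sub>R blinv (p x (r *\<^sub>R \<psi>) (sqrt (1 - r\<^sup>2))))"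
      unfolding Dqe blinv_scaleR(1)[OF P cn] by (simp add: powr_minus)
    also have "\<dots> \<le> C1" using C1[OF nz sq n2] unfolding n1 .
    finally show ?thesis unfolding Dqe using blinv_scaleR(2)[OF P cn] C_def by simp
  next
    case True
    have inS: "(x, 0, \<psi>) \<in> S2" using that by (simp add: S2_def annulus_def)
    have cont: "continuous (at (x, 0, \<psi>) within S2) (Dq [])"
      using has_derivative_continuous Dqd inS by blast
    have e01: "eventually (\<lambda>t. t \<in> {0<..<(1::real)}) (at_right 0)" by (rule eventually_at_right_real) simp
    have ev: "eventually (\<lambda>t. (x, t, \<psi>) \<in> S2) (at_right 0)"
      using e01 by eventually_elim (use that in \<open>auto simp: S2_def annulus_def\<close>)
    have tl: "((\<lambda>t. (x, t, \<psi>)) \<longlongrightarrow> (x, 0, \<psi>)) (at_right 0)"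
      by (intro tendsto_intros)
    have lim1: "((\<lambda>t. Dq [] (x, t, \<psi>)) \<longlongrightarrow> Dq [] (x, 0, \<psi>)) (at_right 0)"
      by (rule continuous_within_tendsto_compose[OF cont ev tl])
    have ev2: "eventually (\<lambda>t. Dq [] (x, t, \<psi>) = t powr (-\<nu>) *\<^sub>R p x (t *\<^sub>R \<psi>) (sqrt (1 - t\<^sup>2))) (at_right 0)"
      using e01
    proof eventually_elim
      case (elim t)
      then have "(x, t, \<psi>) \<in> S2" using that by (auto simp: S2_def annulus_def)
      then show ?case using Dq0 qf[of t \<psi> x] elim that by auto
    qed
    have lim2: "((\<lambda>t. t powr (-\<nu>) *\<^sub>R p x (t *\<^sub>R \<psi>) (sqrt (1 - t\<^sup>2))) \<longlongrightarrow> Dq [] (x, 0, \<psi>)) (at_right 0)"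
      by (rule Lim_transform_eventually[OF lim1 ev2])
    have pas: "principal_angular_symbol \<nu> p x \<psi> = Dq [] (x, 0, \<psi>)"
      unfolding principal_angular_symbol_def that(3) using tendsto_Lim[OF _ lim2] by simp
    have nz: "\<psi> \<noteq> 0" using that(3) by auto
    have "blinvertible (principal_angular_symbol \<nu> p x \<psi>)" using inv2 nz by blast
    then show ?thesis using C2[OF that(3), of x] True unfolding pas C_def by auto
  qed
  define Nn :: "(real^'n) \<times> real \<times> (real^'n) \<Rightarrow> (real^'n) \<times> real \<times> (real^'n)"
    where "Nn y = (fst y, fst (snd y), inverse (norm (snd (snd y))) *\<^sub>R snd (snd y))" for y
  define N' :: "(real^'n) \<times> real \<times> (real^'n) \<Rightarrow> (real^'n) \<times> real \<times> (real^'n) \<Rightarrow> (real^'n) \<times> real \<times> (real^'n)"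
    where "N' y v = (fst v, fst (snd v), inverse (norm (snd (snd y))) *\<^sub>R snd (snd v) +
       (- (inverse (norm (snd (snd y))) * (sgn (snd (snd y)) \<bullet> snd (snd v)) * inverse (norm (snd (snd y))))) *\<^sub>R snd (snd y))" for y v
  have S2nz: "snd (snd y) \<noteq> 0" if "y \<in> S2" for y using that by (auto simp: S2_def annulus_def)
  have NnS2: "Nn y \<in> S2 \<and> norm (snd (snd (Nn y))) = 1" if "y \<in> S2" for y
    using that S2nz[OF that] by (auto simp: S2_def annulus_def Nn_def)
  have Nnd: "(Nn has_derivative N' y) (at y within S2)" if "y \<in> S2" for y
  proof -
    have s: "((\<lambda>y. snd (snd y)) has_derivative (\<lambda>v. snd (snd v))) (at y)" by (intro derivative_intros)
    have f1: "((\<lambda>y. fst y) has_derivative (\<lambda>v. fst v)) (at y)" by (intro derivative_intros)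
    have f2: "((\<lambda>y. fst (snd y)) has_derivative (\<lambda>v. fst (snd v))) (at y)" by (intro derivative_intros)
    have f3: "((\<lambda>y. inverse (norm (snd (snd y))) *\<^sub>R snd (snd y)) has_derivative
       (\<lambda>v. inverse (norm (snd (snd y))) *\<^sub>R snd (snd v) +
       (- (inverse (norm (snd (snd y))) * (sgn (snd (snd y)) \<bullet> snd (snd v)) * inverse (norm (snd (snd y))))) *\<^sub>R snd (snd y))) (at y)"
      by (rule has_derivative_scaleR[OF inv_norm_deriv[OF S2nz[OF that]] s])
    have "(Nn has_derivative N' y) (at y)"
      unfolding Nn_def[abs_def] N'_def[abs_def] by (rule has_derivative_Pair[OF f1 has_derivative_Pair[OF f2 f3]])
    then show ?thesis by (rule has_derivative_at_withinI)
  qed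
  have KN: "(\<lambda>y. N' y v \<bullet> j) \<in> Kc" for v j
  proof -
    have "(\<lambda>y. N' y v \<bullet> j) = (\<lambda>y. (fst v \<bullet> fst j + fst (snd v) * fst (snd j)) +
       (inverse (norm (snd (snd y))) * (snd (snd y) \<bullet> snd (snd v) * 0 + snd (snd v) \<bullet> snd (snd j)) +
        ((-1) * (inverse (norm (snd (snd y))) * (inverse (norm (snd (snd y))) * (inverse (norm (snd (snd y))) * (snd (snd y) \<bullet> snd (snd v)))))) *
        (snd (snd y) \<bullet> snd (snd j))))"
    proof (rule ext)
      fix y :: "(real^'n) \<times> real \<times> (real^'n)"
      have e: "sgn (snd (snd y)) \<bullet> snd (snd v) = inverse (norm (snd (snd y))) * (snd (snd y) \<bullet> snd (snd v))"
        unfolding sgn_div_norm divide_inverse_commute inner_scaleR_left ..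
      show "N' y v \<bullet> j = (fst v \<bullet> fst j + fst (snd v) * fst (snd j)) +
       (inverse (norm (snd (snd y))) * (snd (snd y) \<bullet> snd (snd v) * 0 + snd (snd v) \<bullet> snd (snd j)) +
        ((-1) * (inverse (norm (snd (snd y))) * (inverse (norm (snd (snd y))) * (inverse (norm (snd (snd y))) * (snd (snd y) \<bullet> snd (snd v)))))) *
        (snd (snd y) \<bullet> snd (snd j)))"
        unfolding N'_def e by (cases j) (simp add: inner_add_left algebra_simps)
    qed
    also have "\<dots> \<in> Kc"
      by (intro Kc.kc_const Kc.kc_lin Kc.kc_inv Kc.kc_add Kc.kc_mult)
    finally show ?thesis .
  qed
  interpret GC: gen S2 S2 Nn N' Dq Kc
  proof unfold_locales
    show "\<And>y. y \<in> S2 \<Longrightarrow> Nn y \<in> S2" using NnS2 by blast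
    show "\<And>y. y \<in> S2 \<Longrightarrow> (Nn has_derivative N' y) (at y within S2)" by (rule Nnd)
    show "(Dq vs has_derivative (\<lambda>v. Dq (v#vs) z)) (at z within S2)" if "z \<in> S2" for vs z using Dqd that by blast
    show "blinvertible (Dq [] (Nn y))" if "y \<in> S2" for y
      using key[of "fst (snd (Nn y))" "snd (snd (Nn y))" "fst (Nn y)"] NnS2[OF that] by (auto simp: S2_def)
    show "(\<lambda>y. a) \<in> Kc" for a by (rule Kc.kc_const)
    show "(\<lambda>y. c1 y * c2 y) \<in> Kc" if "c1 \<in> Kc" "c2 \<in> Kc" for c1 c2 by (rule Kc.kc_mult[OF that])
    show "\<exists>c'. (\<forall>y\<in>S2. (c has_derivative c' y) (at y within S2)) \<and> (\<forall>v. (\<lambda>y. c' y v) \<in> Kc)" if cK: "c \<in> Kc" for c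
    proof -
      obtain c' where c': "\<forall>y. snd (snd y) \<noteq> 0 \<longrightarrow> (c has_derivative c' y) (at y)" "\<forall>v. (\<lambda>y. c' y v) \<in> Kc"
        using Kc_deriv[OF cK] by (elim exE conjE)
      have "\<forall>y\<in>S2. (c has_derivative c' y) (at y within S2)"
        using c'(1) S2nz has_derivative_at_withinI by blast
      then show ?thesis using c'(2) by blast
    qed
    show "(\<lambda>y. N' y v \<bullet> j) \<in> Kc" for v j by (rule KN)
  qed
  have bQ: "bounded (GC.Qi ` S2)"
  proof -
    have "norm (GC.Qi y) \<le> C" if "y \<in> S2" for y
      using key[of "fst (snd (Nn y))" "snd (snd (Nn y))" "fst (Nn y)"] NnS2[OF that] by (auto simp: S2_def GC.Qi_def)
    then show ?thesis unfolding bounded_iff by blast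
  qed
  have bDG: "bounded (Dq vs ` S2)" if "set vs \<subseteq> Basis" for vs
  proof -
    have "vs \<in> lists Basis" using that by auto
    then show ?thesis using Dqb by blast
  qed
  have bK: "bounded (c ` S2)" if cK: "c \<in> Kc" for c
  proof -
    obtain B where "\<forall>y\<in>S2. \<bar>c y\<bar> \<le> B" using Kc_bounded[OF cK] unfolding S2_def by blast
    then show ?thesis unfolding bounded_iff by auto
  qed
  have smC: "smooth_bounded_on S2 (\<lambda>y. blinv (Dq [] (Nn y)))"
    by (rule GC.gen_smooth_bounded[OF bQ bDG bK])
  have fC: "blinv (Dq [] (Nn (x, r, \<phi>))) = r powr (- (- \<nu>)) *\<^sub>R blinv (p x (r *\<^sub>R \<phi>) (sqrt (1 - r\<^sup>2)))"
    if "0 < r" "r \<le> 1" "norm \<phi> = 1" for x r \<phi>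
  proof -
    have inS: "(x, r, \<phi>) \<in> S2" using that by (simp add: S2_def annulus_def)
    have NN: "Nn (x, r, \<phi>) = (x, r, \<phi>)" using that by (simp add: Nn_def)
    have nz: "r *\<^sub>R \<phi> \<noteq> 0" using that by auto
    have sq: "0 \<le> sqrt (1 - r\<^sup>2)" using that by (simp add: power_le_one)
    have P: "blinvertible (p x (r *\<^sub>R \<phi>) (sqrt (1 - r\<^sup>2)))" using inv1 nz sq by blast
    have cn: "r powr (-\<nu>) \<noteq> 0" using that by simp
    show ?thesis unfolding NN using Dq0 inS qf[OF that] blinv_scaleR(1)[OF P cn] by (simp add: powr_minus)
  qed
  show ?thesis
    unfolding S_Hom_def mem_Collect_eq
  proof (intro conjI allI impI exI)
    show "smooth_on (UNIV \<times> (UNIV - {0}) \<times> {0..}) (\<lambda>(x, \<xi>, \<mu>). blinv (p x \<xi> \<mu>))" using smA unfolding S1_def .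
    show "blinv (p x (t *\<^sub>R \<xi>) (t * \<mu>)) = t powr (- d) *\<^sub>R blinv (p x \<xi> \<mu>)"
      if "\<xi> \<noteq> 0 \<and> 0 \<le> \<mu> \<and> 0 < t" for x \<xi> \<mu> t using homA that by blast
    show "smooth_bounded_on (UNIV \<times> {0..1} \<times> annulus TYPE('n)) (\<lambda>y. blinv (Dq [] (Nn y)))" using smC unfolding S2_def .
    show "blinv (Dq [] (Nn (x, r, \<phi>))) = r powr (- (- \<nu>)) *\<^sub>R blinv (p x (r *\<^sub>R \<phi>) (sqrt (1 - r\<^sup>2)))"
      if "0 < r \<and> r \<le> 1 \<and> norm \<phi> = 1" for x r \<phi> using fC that by blast
  qed
qed

end
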